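(* Let $\Gamma$ be either $\Gamma_1$ or $\Gamma_2$ (as in the context), with the Laplacian $-d^2/dx^2$ (no potential). Let $\Gamma^A$ (resp. $\Gamma^B$) be the quantum graph obtained from $\Gamma$ by replacing the vertex condition at $A$ (resp. at $B$) by the Dirichlet condition, all other conditions unchanged. Then $\lambda_1(\Gamma^B)<\lambda_1(\Gamma^A)$.
   Context: $\Gamma_1$: two vertices $A,B$ joined by four edges $e_1,\dots,e_4$ of lengths $\ell_1,\dots,\ell_4>0$, with $\delta$-type conditions at $A$ and $B$ with real coupling constants $\gamma_A<\gamma_B$. $\Gamma_2$: $\Gamma_1$ with an additional vertex $C$ and edge $e_0$ of length $\ell_0>0$ joining $C$ to $A$, with Neumann–Kirchhoff conditions at all of $A,B,C$. A $\delta$-type condition with coupling $\gamma_v$ at $v$: $f$ continuous at $v$ and $\sum_{e\ni v}f_e'(v)=\gamma_v f(v)$ (derivatives into the edges); Neumann–Kirchhoff is $\gamma_v=0$; the Dirichlet condition at $v$ is $f_e(v)=0$ for all edges $e$ at $v$ (it decouples the edges at $v$). $\lambda_1(G)$ denotes the smallest eigenvalue of the quantum graph $G$. *)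

theory Defs
  imports "HOL-Analysis.Analysis"
begin

datatype vtx = VA | VB | VC

datatype vcond = Delta real | Dirichlet

text \<open>A compact metric graph: finite set of edge labels, edge lengths, each edge
  e identified with the interval [0, len e], x = 0 at src e, x = len e at tgt e.\<close>
record qgraph =
  edges :: "nat set"
  len   :: "nat \<Rightarrow> real"
  src   :: "nat \<Rightarrow> vtx"
  tgt   :: "nat \<Rightarrow> vtx"
  cond  :: "vtx \<Rightarrow> vcond"

definition vals_at :: "qgraph \<Rightarrow> (nat \<Rightarrow> real \<Rightarrow> real) \<Rightarrow> vtx \<Rightarrow> real \<Rightarrow> bool" where
  "vals_at G f v c \<longleftrightarrow>
     (\<forall>e\<in>edges G. (src G e = v \<longrightarrow> f e 0 = c) \<and> (tgt G e = v \<longrightarrow> f e (len G e) = c))"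

text \<open>Sum of the derivatives at v taken into the edges (g is the derivative of f).\<close>
definition flux_at :: "qgraph \<Rightarrow> (nat \<Rightarrow> real \<Rightarrow> real) \<Rightarrow> vtx \<Rightarrow> real" where
  "flux_at G g v = (\<Sum>e\<in>edges G. (if src G e = v then g e 0 else 0)
                                  + (if tgt G e = v then - g e (len G e) else 0))"

definition vertex_ok :: "qgraph \<Rightarrow> (nat \<Rightarrow> real \<Rightarrow> real) \<Rightarrow> (nat \<Rightarrow> real \<Rightarrow> real) \<Rightarrow> vtx \<Rightarrow> bool" where
  "vertex_ok G f g v = (case cond G v of
       Dirichlet \<Rightarrow> vals_at G f v 0
     | Delta \<gamma> \<Rightarrow> (\<exists>c. vals_at G f v c \<and> flux_at G g v = \<gamma> * c))"

definition is_eigenvalue :: "qgraph \<Rightarrow> real \<Rightarrow> bool" where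
  "is_eigenvalue G lam \<longleftrightarrow> (\<exists>f g.
     (\<forall>e\<in>edges G. \<forall>x\<in>{0..len G e}.
        (f e has_real_derivative g e x) (at x within {0..len G e}) \<and>
        (g e has_real_derivative (- lam * f e x)) (at x within {0..len G e})) \<and>
     (\<exists>e\<in>edges G. \<exists>x\<in>{0..len G e}. f e x \<noteq> 0) \<and>
     (\<forall>v. vertex_ok G f g v))"

definition lambda1 :: "qgraph \<Rightarrow> real" where
  "lambda1 G = Inf {lam. is_eigenvalue G lam}"

definition dirichlet_at :: "vtx \<Rightarrow> qgraph \<Rightarrow> qgraph" where
  "dirichlet_at v G = G\<lparr>cond := (cond G)(v := Dirichlet)\<rparr>"

definition Gamma1 :: "(nat \<Rightarrow> real) \<Rightarrow> real \<Rightarrow> real \<Rightarrow> qgraph" where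
  "Gamma1 l gA gB = \<lparr>edges = {1..4}, len = l, src = (\<lambda>e. VA), tgt = (\<lambda>e. VB),
     cond = (\<lambda>v. case v of VA \<Rightarrow> Delta gA | VB \<Rightarrow> Delta gB | VC \<Rightarrow> Delta 0)\<rparr>"

text \<open>Gamma_2: Gamma_1 plus edge 0 from C to A; Neumann-Kirchhoff everywhere.\<close>
definition Gamma2 :: "(nat \<Rightarrow> real) \<Rightarrow> qgraph" where
  "Gamma2 l = \<lparr>edges = {0..4}, len = l,
     src = (\<lambda>e. if e = 0 then VC else VA), tgt = (\<lambda>e. if e = 0 then VA else VB),
     cond = (\<lambda>v. Delta 0)\<rparr>"

end

theory Submission
  imports Defs
begin


definition Cf :: "real \<Rightarrow> real \<Rightarrow> real" where
  "Cf lam t = (if lam > 0 then cos (sqrt lam * t) else if lam < 0 then cosh (sqrt (-lam) * t) else 1)"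
definition Sf :: "real \<Rightarrow> real \<Rightarrow> real" where
  "Sf lam t = (if lam > 0 then sin (sqrt lam * t) / sqrt lam else if lam < 0 then sinh (sqrt (-lam) * t) / sqrt (-lam) else t)"

lemma Cf0 [simp]: "Cf lam 0 = 1" by (simp add: Cf_def)
lemma Sf0 [simp]: "Sf lam 0 = 0" by (simp add: Sf_def)

lemma Sf_deriv: "(Sf lam has_real_derivative Cf lam t) (at t within X)"
proof -
  consider "lam > 0" | "lam < 0" | "lam = 0" by linarith
  then show ?thesis
  proof cases
    case 1
    have "((\<lambda>t. sin (sqrt lam * t) / sqrt lam) has_real_derivative cos (sqrt lam * t)) (at t within X)"
      using 1 by (auto intro!: derivative_eq_intros simp: mult.assoc)
    then show ?thesis using 1 by (simp add: Sf_def[abs_def] Cf_def)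
  next
    case 2
    have "((\<lambda>t. sinh (sqrt (-lam) * t) / sqrt (-lam)) has_real_derivative cosh (sqrt (-lam) * t)) (at t within X)"
    proof -
      have e: "sqrt (-lam) * sqrt (-lam) = -lam" using 2 by simp
      show ?thesis using 2 by (auto intro!: derivative_eq_intros simp: mult.assoc e)
    qed
    then show ?thesis using 2 by (simp add: Sf_def[abs_def] Cf_def)
  next
    case 3
    then show ?thesis by (simp add: Sf_def[abs_def] Cf_def)
  qed
qed

lemma Cf_deriv: "(Cf lam has_real_derivative (- lam * Sf lam t)) (at t within X)"
proof -
  consider "lam > 0" | "lam < 0" | "lam = 0" by linarith
  then show ?thesis
  proof cases
    case 1
    have "((\<lambda>t. cos (sqrt lam * t)) has_real_derivative - sin (sqrt lam * t) * sqrt lam) (at t within X)"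
      by (auto intro!: derivative_eq_intros)
    moreover have "- sin (sqrt lam * t) * sqrt lam = - lam * (sin (sqrt lam * t) / sqrt lam)"
      using 1 by (simp add: field_simps)
    ultimately show ?thesis using 1 by (simp add: Sf_def Cf_def[abs_def])
  next
    case 2
    have "((\<lambda>t. cosh (sqrt (-lam) * t)) has_real_derivative sinh (sqrt (-lam) * t) * sqrt (-lam)) (at t within X)"
      by (auto intro!: derivative_eq_intros)
    moreover have "sinh (sqrt (-lam) * t) * sqrt (-lam) = - lam * (sinh (sqrt (-lam) * t) / sqrt (-lam))"
    proof -
      have e: "sqrt (-lam) * sqrt (-lam) = -lam" using 2 by simp
      show ?thesis using 2 by (simp add: field_simps mult.assoc[symmetric] e)
    qed
    ultimately show ?thesis using 2 by (simp add: Sf_def Cf_def[abs_def])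
  next
    case 3
    then show ?thesis by (simp add: Sf_def Cf_def[abs_def])
  qed
qed

lemma CS_id: "(Cf lam t)^2 + lam * (Sf lam t)^2 = 1"
proof -
  consider "lam > 0" | "lam < 0" | "lam = 0" by linarith
  then show ?thesis
  proof cases
    case 1
    then show ?thesis by (simp add: Cf_def Sf_def power_divide)
  next
    case 2
    have "cosh (sqrt (-lam) * t) ^ 2 - sinh (sqrt (-lam) * t) ^ 2 = 1"
      by (simp add: sinh_square_eq)
    then show ?thesis using 2 by (simp add: Cf_def Sf_def power_divide)
  next
    case 3 then show ?thesis by (simp add: Cf_def Sf_def)
  qed
qed

lemma ode_rep:
  assumes der: "\<forall>x\<in>{0..l}. (f has_real_derivative g x) (at x within {0..l}) \<and>
        (g has_real_derivative (- lam * f x)) (at x within {0..l})"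
    and x: "x \<in> {0..l}"
  shows "f x = f 0 * Cf lam x + g 0 * Sf lam x \<and> g x = - lam * f 0 * Sf lam x + g 0 * Cf lam x"
proof -
  have "l \<ge> 0" using x by auto
  hence z: "0 \<in> {0..l}" by auto
  have "\<exists>c. \<forall>y\<in>{0..l}. Cf lam y * f y - Sf lam y * g y = c"
  proof (rule has_field_derivative_zero_constant)
    fix y assume y: "y \<in> {0..l}"
    have "((\<lambda>y. Cf lam y * f y - Sf lam y * g y) has_real_derivative
        (- lam * Sf lam y) * f y + Cf lam y * g y - (Cf lam y * g y + Sf lam y * (- lam * f y))) (at y within {0..l})"
      using der y by (auto intro!: derivative_eq_intros Cf_deriv Sf_deriv)
    then show "((\<lambda>y. Cf lam y * f y - Sf lam y * g y) has_real_derivative 0) (at y within {0..l})"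
      by (simp add: algebra_simps)
  qed auto
  then obtain a where a: "\<forall>y\<in>{0..l}. Cf lam y * f y - Sf lam y * g y = a" by blast
  have "\<exists>c. \<forall>y\<in>{0..l}. lam * Sf lam y * f y + Cf lam y * g y = c"
  proof (rule has_field_derivative_zero_constant)
    fix y assume y: "y \<in> {0..l}"
    have "((\<lambda>y. lam * Sf lam y * f y + Cf lam y * g y) has_real_derivative
        lam * Cf lam y * f y + lam * Sf lam y * g y + ((- lam * Sf lam y) * g y + Cf lam y * (- lam * f y))) (at y within {0..l})"
      using der y by (auto intro!: derivative_eq_intros Cf_deriv Sf_deriv)
    then show "((\<lambda>y. lam * Sf lam y * f y + Cf lam y * g y) has_real_derivative 0) (at y within {0..l})"
      by (simp add: algebra_simps)
  qed auto
  then obtain b where b: "\<forall>y\<in>{0..l}. lam * Sf lam y * f y + Cf lam y * g y = b" by blast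
  have a0: "a = f 0" using a z by force
  have b0: "b = g 0" using b z by force
  have ax: "Cf lam x * f x - Sf lam x * g x = f 0" using a x a0 by blast
  have bx: "lam * Sf lam x * f x + Cf lam x * g x = g 0" using b x b0 by blast
  have id: "(Cf lam x)^2 + lam * (Sf lam x)^2 = 1" by (rule CS_id)
  have "f x = ((Cf lam x)^2 + lam * (Sf lam x)^2) * f x" using id by simp
  also have "\<dots> = Cf lam x * (Cf lam x * f x - Sf lam x * g x) + Sf lam x * (lam * Sf lam x * f x + Cf lam x * g x)"
    by (simp add: algebra_simps power2_eq_square)
  also have "\<dots> = Cf lam x * f 0 + Sf lam x * g 0" by (simp only: ax bx)
  finally have 1: "f x = f 0 * Cf lam x + g 0 * Sf lam x" by (simp add: algebra_simps)
  have "g x = ((Cf lam x)^2 + lam * (Sf lam x)^2) * g x" using id by simp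
  also have "\<dots> = - lam * Sf lam x * (Cf lam x * f x - Sf lam x * g x) + Cf lam x * (lam * Sf lam x * f x + Cf lam x * g x)"
    by (simp add: algebra_simps power2_eq_square)
  also have "\<dots> = - lam * Sf lam x * f 0 + Cf lam x * g 0" by (simp only: ax bx)
  finally have 2: "g x = - lam * f 0 * Sf lam x + g 0 * Cf lam x" by (simp add: algebra_simps)
  show ?thesis using 1 2 by blast
qed



lemma sin_lt_x: fixes x :: real assumes "x > 0" shows "sin x < x"
proof (cases "x \<ge> 2")
  case True
  then show ?thesis using sin_le_one[of x] by linarith
next
  case False
  have h: "sin x = 2 * sin (x/2) * cos (x/2)" using sin_double[of "x/2"] by simp
  have s: "0 < sin (x/2)" using assms False pi_gt3 by (intro sin_gt_zero) auto
  have sx: "sin (x/2) \<le> x/2" using assms sin_x_le_x[of "x/2"] by simp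
  have "cos (x/2) < 1"
  proof -
    have "(cos (x/2))^2 = 1 - (sin (x/2))^2" by (simp add: cos_squared_eq)
    also have "\<dots> < 1" using s by simp
    finally have "(cos (x/2))^2 < 1" .
    hence "cos (x/2) \<noteq> 1" by auto
    moreover have "cos (x/2) \<le> 1" by simp
    ultimately show ?thesis by linarith
  qed
  hence "sin (x/2) * cos (x/2) < sin (x/2) * 1" using s by (intro mult_strict_left_mono) auto
  hence "sin x < 2 * sin (x/2)" using h by simp
  then show ?thesis using sx by linarith
qed

lemma x_lt_sinh: fixes x :: real assumes "x > 0" shows "x < sinh x"
proof -
  have "(\<lambda>u. sinh u - u) 0 < (\<lambda>u. sinh u - u) x"
  proof (rule DERIV_pos_imp_increasing_open[OF assms])
    fix u :: real assume u: "0 < u" "u < x"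
    have "cosh 0 < cosh u" using u by (subst cosh_real_nonneg_less_iff) auto
    then show "\<exists>y. ((\<lambda>u. sinh u - u) has_real_derivative y) (at u) \<and> y > 0"
      by (intro exI[of _ "cosh u - 1"]) (auto intro!: derivative_eq_intros)
  qed (intro continuous_intros)
  then show ?thesis by simp
qed

lemma sinh_lt_xcosh: fixes x :: real assumes "x > 0" shows "sinh x < x * cosh x"
proof -
  have "(\<lambda>u. u * cosh u - sinh u) 0 < (\<lambda>u. u * cosh u - sinh u) x"
  proof (rule DERIV_pos_imp_increasing_open[OF assms])
    fix u :: real assume u: "0 < u" "u < x"
    then show "\<exists>y. ((\<lambda>u. u * cosh u - sinh u) has_real_derivative y) (at u) \<and> y > 0"
      by (intro exI[of _ "u * sinh u"]) (auto intro!: derivative_eq_intros)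
  qed (intro continuous_intros)
  then show ?thesis by simp
qed

lemma xcos_lt_sin: fixes x :: real assumes "0 < x" "x < pi" shows "x * cos x < sin x"
proof -
  have "(\<lambda>u. sin u - u * cos u) 0 < (\<lambda>u. sin u - u * cos u) x"
  proof (rule DERIV_pos_imp_increasing_open[OF assms(1)])
    fix u :: real assume u: "0 < u" "u < x"
    then have "sin u > 0" using assms by (intro sin_gt_zero) auto
    then show "\<exists>y. ((\<lambda>u. sin u - u * cos u) has_real_derivative y) (at u) \<and> y > 0"
      using u by (intro exI[of _ "u * sin u"]) (auto intro!: derivative_eq_intros)
  qed (intro continuous_intros)
  then show ?thesis by simp
qed

lemma cos_ge_quad: fixes x :: real shows "1 - x^2/2 \<le> cos x"
proof -
  have "cos x = 1 - 2 * sin (x/2) ^ 2" using cos_double_sin[of "x/2"] by simp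
  moreover have "sin (x/2)^2 \<le> (x/2)^2"
    using abs_sin_x_le_abs_x[of "x/2"] by (metis abs_ge_zero power2_abs power_mono)
  ultimately show ?thesis by (simp add: power_divide)
qed

definition phi :: "real \<Rightarrow> real" where "phi x = x * cos x / sin x"
definition psi :: "real \<Rightarrow> real" where "psi x = x * cosh x / sinh x"

lemma phi_decr: assumes "0 < x" "x < y" "y < pi" shows "phi y < phi x"
proof -
  have "phi x > phi y"
  proof (rule DERIV_neg_imp_decreasing[OF assms(2)])
    fix u assume u: "x \<le> u" "u \<le> y"
    have s: "sin u > 0" using u assms by (intro sin_gt_zero) auto
    have "sin (2*u) < 2*u" using u assms by (intro sin_lt_x) auto
    hence lt: "sin u * cos u - u < 0" by (simp add: sin_double)
    have "(phi has_real_derivative ((cos u - u * sin u) * sin u - u * cos u * cos u) / (sin u)^2) (at u)"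
      unfolding phi_def[abs_def] using s by (auto intro!: derivative_eq_intros simp: power2_eq_square)
    moreover have "((cos u - u * sin u) * sin u - u * cos u * cos u) = sin u * cos u - u"
    proof -
      have "((cos u - u * sin u) * sin u - u * cos u * cos u) = sin u * cos u - u * ((sin u)^2 + (cos u)^2)"
        by algebra
      then show ?thesis by (simp only: sin_cos_squared_add mult_1_right)
    qed
    ultimately show "\<exists>d. (phi has_real_derivative d) (at u) \<and> d < 0"
      using lt s by (intro exI) (auto simp: divide_neg_pos)
  qed
  then show ?thesis .
qed

lemma psi_incr: assumes "0 < x" "x < y" shows "psi x < psi y"
proof (rule DERIV_pos_imp_increasing[OF assms(2)])
  fix u assume u: "x \<le> u" "u \<le> y"
  have s: "sinh u > 0" using u assms by auto
  have "2*u < sinh (2*u)" using u assms by (intro x_lt_sinh) auto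
  hence lt: "sinh u * cosh u - u > 0" by (simp add: sinh_double)
  have "(psi has_real_derivative ((cosh u + u * sinh u) * sinh u - u * cosh u * cosh u) / (sinh u)^2) (at u)"
    unfolding psi_def[abs_def] using s by (auto intro!: derivative_eq_intros simp: power2_eq_square)
  moreover have "((cosh u + u * sinh u) * sinh u - u * cosh u * cosh u) = sinh u * cosh u - u"
  proof -
    have "cosh u ^2 - sinh u ^ 2 = 1" by (simp add: sinh_square_eq)
    moreover have "((cosh u + u * sinh u) * sinh u - u * cosh u * cosh u) = sinh u * cosh u - u * (cosh u ^2 - sinh u ^ 2)"
      by (simp add: algebra_simps power2_eq_square)
    ultimately show ?thesis by simp
  qed
  ultimately show "\<exists>d. (psi has_real_derivative d) (at u) \<and> d > 0"
    using lt s by (intro exI) auto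
qed

lemma phi_lt1: "0 < x \<Longrightarrow> x < pi \<Longrightarrow> phi x < 1"
  unfolding phi_def using xcos_lt_sin[of x] sin_gt_zero[of x] by (simp add: divide_less_eq)

lemma psi_gt1: "0 < x \<Longrightarrow> 1 < psi x"
  unfolding psi_def using sinh_lt_xcosh[of x] by (simp add: less_divide_eq)

lemma psi_ge_x: "0 < x \<Longrightarrow> x \<le> psi x"
  unfolding psi_def using sinh_le_cosh_real[of x] by (simp add: le_divide_eq mult_left_mono)

lemma psi_le: assumes "0 < x" shows "psi x \<le> 1 + x"
proof -
  have "exp (-x) \<le> 1" using assms by simp
  hence "x * exp (-x) \<le> x" using assms by (simp add: mult_left_le)
  hence "x * (cosh x - sinh x) \<le> sinh x"
    using x_lt_sinh[OF assms] by (simp add: cosh_minus_sinh)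
  then show ?thesis unfolding psi_def using assms by (simp add: divide_le_eq algebra_simps)
qed

lemma phi_ge: assumes "0 < x" "x \<le> pi/2" shows "1 - x^2/2 \<le> phi x"
proof -
  have s: "sin x > 0" using assms by (intro sin_gt_zero) auto
  have c: "cos x \<ge> 0" using assms by (intro cos_ge_zero) auto
  have "cos x * sin x \<le> cos x * x" using c sin_x_le_x[of x] assms by (intro mult_left_mono) auto
  hence "cos x \<le> phi x" unfolding phi_def using s
    by (simp add: le_divide_eq mult.commute)
  then show ?thesis using cos_ge_quad[of x] by linarith
qed



definition mfun :: "real \<Rightarrow> real \<Rightarrow> real" where "mfun l lam = Cf lam l / Sf lam l"
definition pfun :: "real \<Rightarrow> real \<Rightarrow> real" where "pfun l lam = lam * Sf lam l / Cf lam l"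

lemma sqrt_bound: assumes "0 < lam" "lam < (c/t)^2" "0 < c" "0 < t" shows "sqrt lam * t < c"
proof -
  have "sqrt lam < sqrt ((c/t)^2)" using assms by (intro real_sqrt_less_mono) 
  also have "\<dots> = c/t" using assms by simp
  finally show ?thesis using assms by (simp add: less_divide_eq)
qed

lemma sqrt_bound_le: assumes "0 < lam" "lam \<le> (c/t)^2" "0 < c" "0 < t" shows "sqrt lam * t \<le> c"
proof -
  have "sqrt lam \<le> sqrt ((c/t)^2)" using assms by (intro real_sqrt_le_mono) 
  also have "\<dots> = c/t" using assms by simp
  finally show ?thesis using assms by (simp add: le_divide_eq)
qed

lemma Sf_pos: assumes "0 < t" "lam < (pi/t)^2" shows "0 < Sf lam t"
proof -
  consider "lam > 0" | "lam < 0" | "lam = 0" by linarith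
  then show ?thesis
  proof cases
    case 1
    have "sqrt lam * t < pi" using sqrt_bound[OF 1 assms(2)] assms by simp
    then have "sin (sqrt lam * t) > 0" using 1 assms by (intro sin_gt_zero) auto
    then show ?thesis using 1 by (simp add: Sf_def)
  next
    case 2 then show ?thesis using assms by (simp add: Sf_def)
  next
    case 3 then show ?thesis using assms by (simp add: Sf_def)
  qed
qed

lemma Cf_pos: assumes "0 < t" "lam < (pi/(2*t))^2" shows "0 < Cf lam t"
proof -
  consider "lam > 0" | "lam < 0" | "lam = 0" by linarith
  then show ?thesis
  proof cases
    case 1
    have "sqrt lam * (2*t) < pi" using sqrt_bound[of lam pi "2*t"] 1 assms by simp
    moreover have "sqrt lam * t > 0" using 1 assms by simp
    ultimately have "cos (sqrt lam * t) > 0" using 1 assms pi_gt_zero by (intro cos_gt_zero_pi) linarith+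
    then show ?thesis using 1 by (simp add: Cf_def)
  next
    case 2 then show ?thesis using assms by (simp add: Cf_def)
  next
    case 3 then show ?thesis using assms by (simp add: Cf_def)
  qed
qed

lemma mfun_alt: assumes "0 < l"
  shows "mfun l lam = (if lam > 0 then phi (sqrt lam * l) / l else if lam < 0 then psi (sqrt (-lam) * l) / l else 1/l)"
  using assms by (auto simp: mfun_def Cf_def Sf_def phi_def psi_def field_simps)

lemma mfun_mono: assumes "0 < l" "a < b" "b < (pi/l)^2" shows "mfun l b < mfun l a"
proof -
  have pl: "(pi/l)^2 > 0" using assms by simp
  consider "0 < a" | "a < 0" "b < 0" | "a < 0" "b = 0" | "a < 0" "b > 0" | "a = 0" by linarith
  then show ?thesis
  proof cases
    case 1
    have "sqrt a * l < sqrt b * l" using assms 1 by simp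
    moreover have "sqrt b * l < pi" using sqrt_bound[of b pi l] assms 1 by simp
    ultimately have "phi (sqrt b * l) < phi (sqrt a * l)" using 1 assms by (intro phi_decr) auto
    then show ?thesis using 1 assms by (simp add: mfun_alt divide_strict_right_mono)
  next
    case 2
    have "sqrt (-b) * l < sqrt (-a) * l" using assms 2 by simp
    then have "psi (sqrt (-b) * l) < psi (sqrt (-a) * l)" using 2 assms by (intro psi_incr) auto
    then show ?thesis using 2 assms by (simp add: mfun_alt divide_strict_right_mono)
  next
    case 3
    have "1 < psi (sqrt (-a) * l)" using 3 assms by (intro psi_gt1) auto
    then show ?thesis using 3 assms by (simp add: mfun_alt divide_strict_right_mono)
  next
    case 4
    have "1 < psi (sqrt (-a) * l)" using 4 assms by (intro psi_gt1) auto
    moreover have "phi (sqrt b * l) < 1" using sqrt_bound[of b pi l] 4 assms by (intro phi_lt1) auto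
    ultimately show ?thesis using 4 assms by (simp add: mfun_alt divide_strict_right_mono)
  next
    case 5
    have "phi (sqrt b * l) < 1" using sqrt_bound[of b pi l] 5 assms by (intro phi_lt1) auto
    then show ?thesis using 5 assms by (simp add: mfun_alt divide_strict_right_mono)
  qed
qed

lemma mfun_le_neg: assumes "0 < l" "lam < 0" shows "sqrt (-lam) \<le> mfun l lam"
proof -
  have "sqrt (-lam) * l \<le> psi (sqrt (-lam) * l)" using assms by (intro psi_ge_x) auto
  then show ?thesis using assms by (simp add: mfun_alt le_divide_eq)
qed

lemma mfun_cont: assumes "0 < l" "lam < (pi/l)^2" shows "isCont (mfun l) lam"
proof -
  consider "lam > 0" | "lam < 0" | "lam = 0" by linarith
  then show ?thesis
  proof cases
    case 1
    have ev: "eventually (\<lambda>x. x \<in> {0<..}) (nhds lam)" using 1 by (intro eventually_nhds_in_open) auto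
    have E: "eventually (\<lambda>x. mfun l x = sqrt x * cos (sqrt x * l) / sin (sqrt x * l)) (nhds lam)"
      using ev by eventually_elim (auto simp: mfun_def Cf_def Sf_def)
    moreover have "sin (sqrt lam * l) \<noteq> 0"
      using Sf_pos[OF assms(1,2)] 1 by (auto simp: Sf_def)
    hence "isCont (\<lambda>x. sqrt x * cos (sqrt x * l) / sin (sqrt x * l)) lam"
      by (intro continuous_intros) auto
    ultimately show ?thesis using isCont_cong[OF E] by simp
  next
    case 2
    have ev: "eventually (\<lambda>x. x \<in> {..<0}) (nhds lam)" using 2 by (intro eventually_nhds_in_open) auto
    have E: "eventually (\<lambda>x. mfun l x = sqrt (-x) * cosh (sqrt (-x) * l) / sinh (sqrt (-x) * l)) (nhds lam)"
      using ev by eventually_elim (auto simp: mfun_def Cf_def Sf_def)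
    moreover have "sinh (sqrt (-lam) * l) \<noteq> 0"
      using 2 assms by auto
    hence "isCont (\<lambda>x. sqrt (-x) * cosh (sqrt (-x) * l) / sinh (sqrt (-x) * l)) lam"
      by (intro continuous_intros) auto
    ultimately show ?thesis using isCont_cong[OF E] by simp
  next
    case 3
    define d where "d = (pi/(2*l))^2"
    have d: "d > 0" using assms by (simp add: d_def)
    have lo: "eventually (\<lambda>x. 1/l - \<bar>x\<bar> * l / 2 \<le> mfun l x) (at 0)"
      and hi: "eventually (\<lambda>x. mfun l x \<le> 1/l + sqrt \<bar>x\<bar>) (at 0)"
    proof -
      have "eventually (\<lambda>x. \<bar>x\<bar> < d) (at (0::real))"
        unfolding eventually_at using d by (intro exI[of _ d]) auto
      then have "eventually (\<lambda>x. 1/l - \<bar>x\<bar> * l / 2 \<le> mfun l x \<and> mfun l x \<le> 1/l + sqrt \<bar>x\<bar>) (at 0)"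
      proof eventually_elim
        case (elim x)
        consider "x > 0" | "x < 0" | "x = 0" by linarith
        then show ?case
        proof cases
          case 1
          have x1: "sqrt x * l \<le> pi/2" using sqrt_bound_le[of x "pi/2" l] 1 elim assms
            by (simp add: d_def power_divide)
          have x2: "sqrt x * l < pi" using x1 pi_gt_zero by linarith
          have "1 - (sqrt x * l)^2/2 \<le> phi (sqrt x * l)" using 1 x1 assms by (intro phi_ge) auto
          moreover have "(sqrt x * l)^2 = x * l^2" using 1 by (simp add: power_mult_distrib)
          ultimately have a: "1 - x * l^2 / 2 \<le> phi (sqrt x * l)" by simp
          have b: "phi (sqrt x * l) < 1" using 1 x2 assms by (intro phi_lt1) auto
          have "1/l - x * l / 2 = (1 - x * l^2/2) / l" using assms by (simp add: field_simps power2_eq_square)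
          also have "\<dots> \<le> phi (sqrt x * l) / l" using a assms by (simp add: divide_right_mono)
          finally have "1/l - \<bar>x\<bar> * l / 2 \<le> mfun l x" using 1 assms by (simp add: mfun_alt)
          moreover have "mfun l x \<le> 1/l" using b 1 assms by (simp add: mfun_alt divide_right_mono)
          ultimately show ?thesis by (smt (verit) real_sqrt_ge_zero)
        next
          case 2
          have a: "1 < psi (sqrt (-x) * l)" using 2 assms by (intro psi_gt1) auto
          have b: "psi (sqrt (-x) * l) \<le> 1 + sqrt (-x) * l" using 2 assms by (intro psi_le) auto
          have "mfun l x \<le> (1 + sqrt (-x) * l) / l" using b 2 assms by (simp add: mfun_alt divide_right_mono)
          also have "\<dots> = 1/l + sqrt \<bar>x\<bar>" using assms 2 by (simp add: field_simps)
          finally have "mfun l x \<le> 1/l + sqrt \<bar>x\<bar>" .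
          moreover have "1/l \<le> mfun l x" using a 2 assms by (simp add: mfun_alt divide_right_mono)
          ultimately show ?thesis using assms
            by (smt (verit) abs_ge_zero divide_nonneg_pos mult_nonneg_nonneg)
        next
          case 3 then show ?thesis using assms by (simp add: mfun_alt)
        qed
      qed
      then show "eventually (\<lambda>x. 1/l - \<bar>x\<bar> * l / 2 \<le> mfun l x) (at 0)"
        "eventually (\<lambda>x. mfun l x \<le> 1/l + sqrt \<bar>x\<bar>) (at 0)" by (auto elim: eventually_mono)
    qed
    have t1: "((\<lambda>x. 1/l - \<bar>x\<bar> * l / 2) \<longlongrightarrow> 1/l - \<bar>0\<bar> * l / 2) (at (0::real))"
      by (intro tendsto_intros) auto
    have t2: "((\<lambda>x. 1/l + sqrt \<bar>x\<bar>) \<longlongrightarrow> 1/l + sqrt \<bar>0\<bar>) (at (0::real))"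
      by (intro tendsto_intros)
    have "(mfun l \<longlongrightarrow> 1/l) (at 0)"
      using tendsto_sandwich[OF lo hi] t1 t2 by simp
    then show ?thesis using 3 assms by (simp add: isCont_def mfun_alt)
  qed
qed



lemma pfun_alt: assumes "0 < l"
  shows "pfun l lam = (if lam > 0 then sqrt lam * tan (sqrt lam * l) else if lam < 0 then - sqrt (-lam) * tanh (sqrt (-lam) * l) else 0)"
proof -
  consider "lam > 0" | "lam < 0" | "lam = 0" by linarith
  then show ?thesis
  proof cases
    case 1
    have e: "lam / sqrt lam = sqrt lam" using 1 by (simp add: real_div_sqrt)
    have "pfun l lam = (lam / sqrt lam) * (sin (sqrt lam * l) / cos (sqrt lam * l))"
      using 1 by (simp add: pfun_def Cf_def Sf_def)
    then show ?thesis using 1 e by (simp add: tan_def)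
  next
    case 2
    define s where "s = sqrt (-lam)"
    have s: "s > 0" "lam = - (s * s)" using 2 by (auto simp: s_def)
    have "pfun l lam = lam * (sinh (s * l) / s) / cosh (s * l)"
      using 2 by (simp add: pfun_def Cf_def Sf_def s_def)
    also have "\<dots> = - (s * s) * (sinh (s * l) / s) / cosh (s * l)" using s(2) by simp
    also have "\<dots> = - s * tanh (s * l)" using s(1) by (simp add: tanh_def)
    finally show ?thesis using 2 by (simp add: s_def)
  next
    case 3 then show ?thesis by (simp add: pfun_def)
  qed
qed

lemma pfun_pos: assumes "0 < l" "0 < lam" "lam < (pi/(2*l))^2" shows "0 < pfun l lam"
proof -
  have "sqrt lam * (2*l) < pi" using sqrt_bound[of lam pi "2*l"] assms by auto
  hence "sqrt lam * l < pi/2" by simp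
  hence "0 < tan (sqrt lam * l)" using assms by (intro tan_gt_zero) auto
  then show ?thesis using assms by (simp add: pfun_alt)
qed

lemma pfun_neg: "0 < l \<Longrightarrow> lam < 0 \<Longrightarrow> pfun l lam < 0"
  by (auto simp: pfun_alt)

lemma pfun_mono: assumes "0 < l" "a < b" "b < (pi/(2*l))^2" shows "pfun l a < pfun l b"
proof -
  consider "0 < a" | "a < 0" "b < 0" | "a < 0" "b \<ge> 0" | "a = 0" by linarith
  then show ?thesis
  proof cases
    case 1
    have bb: "sqrt b * l < pi/2" using sqrt_bound[of b pi "2*l"] assms 1 by simp
    have "sqrt a * l < sqrt b * l" using assms 1 by simp
    then have "tan (sqrt a * l) < tan (sqrt b * l)" using bb 1 assms pi_gt_zero
      by (intro tan_monotone) (smt (verit) mult_pos_pos real_sqrt_gt_zero)+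
    moreover have "sqrt a * l < pi/2" using bb \<open>sqrt a * l < sqrt b * l\<close> by linarith
    hence "0 < tan (sqrt a * l)" using 1 assms by (intro tan_gt_zero) auto
    moreover have "sqrt a < sqrt b" using 1 assms by simp
    ultimately have "sqrt a * tan (sqrt a * l) < sqrt b * tan (sqrt b * l)"
      using 1 by (intro mult_strict_mono) auto
    then show ?thesis using 1 assms by (simp add: pfun_alt)
  next
    case 2
    have "sqrt (-b) * l < sqrt (-a) * l" using assms 2 by simp
    then have "tanh (sqrt (-b) * l) < tanh (sqrt (-a) * l)" by simp
    moreover have "0 < tanh (sqrt (-b) * l)" using 2 assms by simp
    moreover have "sqrt (-b) < sqrt (-a)" using 2 assms by simp
    ultimately have "sqrt (-b) * tanh (sqrt (-b) * l) < sqrt (-a) * tanh (sqrt (-a) * l)"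
      using 2 by (intro mult_strict_mono) auto
    then show ?thesis using 2 assms by (simp add: pfun_alt)
  next
    case 3
    have "pfun l a < 0" using 3 assms by (intro pfun_neg)
    moreover have "0 \<le> pfun l b" using 3 assms pfun_pos[of l b] by (cases "b = 0") (auto simp: pfun_alt)
    ultimately show ?thesis by linarith
  next
    case 4
    then show ?thesis using assms pfun_pos[of l b] by (simp add: pfun_alt)
  qed
qed

lemma pfun_cont: assumes "0 < l" "lam < (pi/(2*l))^2" shows "isCont (pfun l) lam"
proof -
  consider "lam > 0" | "lam < 0" | "lam = 0" by linarith
  then show ?thesis
  proof cases
    case 1
    have ev: "eventually (\<lambda>x. x \<in> {0<..}) (nhds lam)" using 1 by (intro eventually_nhds_in_open) auto
    have E: "eventually (\<lambda>x. pfun l x = sqrt x * (sin (sqrt x * l) / cos (sqrt x * l))) (nhds lam)"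
      using ev by eventually_elim (auto simp: pfun_alt[OF assms(1)] tan_def)
    moreover have "cos (sqrt lam * l) \<noteq> 0"
      using Cf_pos[OF assms(1,2)] 1 by (auto simp: Cf_def)
    hence "isCont (\<lambda>x. sqrt x * (sin (sqrt x * l) / cos (sqrt x * l))) lam"
      by (intro continuous_intros) auto
    ultimately show ?thesis using isCont_cong[OF E] by simp
  next
    case 2
    have ev: "eventually (\<lambda>x. x \<in> {..<0}) (nhds lam)" using 2 by (intro eventually_nhds_in_open) auto
    have E: "eventually (\<lambda>x. pfun l x = - sqrt (-x) * (sinh (sqrt (-x) * l) / cosh (sqrt (-x) * l))) (nhds lam)"
      using ev by eventually_elim (auto simp: pfun_alt[OF assms(1)] tanh_def)
    have "isCont (\<lambda>x. - sqrt (-x) * (sinh (sqrt (-x) * l) / cosh (sqrt (-x) * l))) lam"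
      by (intro continuous_intros) auto
    then show ?thesis using isCont_cong[OF E] by simp
  next
    case 3
    define d where "d = min ((pi/(2*l))^2) (1/l^2)"
    have d: "d > 0" using assms by (simp add: d_def)
    have "eventually (\<lambda>x. \<bar>x\<bar> < d) (at (0::real))"
      unfolding eventually_at using d by (intro exI[of _ d]) auto
    then have "eventually (\<lambda>x. - sqrt \<bar>x\<bar> \<le> pfun l x \<and> pfun l x \<le> 2 * \<bar>x\<bar> * l) (at 0)"
    proof eventually_elim
      case (elim x)
      consider "x > 0" | "x < 0" | "x = 0" by linarith
      then show ?case
      proof cases
        case 1
        have x1: "sqrt x * (2*l) < pi" using sqrt_bound[of x pi "2*l"] 1 elim assms
          by (simp add: d_def)
        have x2: "sqrt x * l \<le> 1" using sqrt_bound_le[of x 1 l] 1 elim assms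
          by (simp add: d_def power_divide)
        have sx: "0 < sqrt x * l" using 1 assms by simp
        have "1 - (sqrt x * l)^2/2 \<le> cos (sqrt x * l)" by (rule cos_ge_quad)
        moreover have "(sqrt x * l)^2 \<le> 1" using x2 sx by (simp add: power_le_one)
        ultimately have c: "1/2 \<le> cos (sqrt x * l)" by linarith
        have s: "sin (sqrt x * l) \<le> sqrt x * l" using sx by (intro sin_x_le_x) auto
        have "tan (sqrt x * l) = sin (sqrt x * l) / cos (sqrt x * l)" by (simp add: tan_def)
        also have "\<dots> \<le> (sqrt x * l) / (1/2)" using c s sx
          by (intro frac_le) (auto intro: sin_ge_zero)
        finally have "tan (sqrt x * l) \<le> 2 * (sqrt x * l)" by simp
        hence "sqrt x * tan (sqrt x * l) \<le> sqrt x * (2 * (sqrt x * l))"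
          using 1 by (intro mult_left_mono) auto
        also have "\<dots> = 2 * x * l" using 1 by (simp add: algebra_simps)
        finally have "pfun l x \<le> 2 * \<bar>x\<bar> * l" using 1 assms by (simp add: pfun_alt)
        moreover have "x < (pi/(2*l))^2" using elim 1 by (simp add: d_def)
        hence "0 < pfun l x" using 1 assms by (intro pfun_pos) auto
        ultimately show ?thesis by (smt (verit) real_sqrt_ge_zero)
      next
        case 2
        have "tanh (sqrt (-x) * l) < 1" by (rule tanh_real_lt_1)
        moreover have "0 < tanh (sqrt (-x) * l)" using 2 assms by simp
        ultimately have "sqrt (-x) * tanh (sqrt (-x) * l) \<le> sqrt (-x)"
          using 2 by (simp add: mult_left_le)
        moreover have "sqrt \<bar>x\<bar> = sqrt (-x)" using 2 by simp
        ultimately have "- sqrt \<bar>x\<bar> \<le> pfun l x" using 2 assms by (simp add: pfun_alt)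
        moreover have "pfun l x < 0" using 2 assms by (intro pfun_neg)
        moreover have "0 \<le> 2 * \<bar>x\<bar> * l" using assms by simp
        ultimately show ?thesis by linarith
      next
        case 3 then show ?thesis using assms by (simp add: pfun_alt)
      qed
    qed
    then have lo: "eventually (\<lambda>x. - sqrt \<bar>x\<bar> \<le> pfun l x) (at 0)"
      and hi: "eventually (\<lambda>x. pfun l x \<le> 2 * \<bar>x\<bar> * l) (at 0)" by (auto elim: eventually_mono)
    have t1: "((\<lambda>x. - sqrt \<bar>x\<bar>) \<longlongrightarrow> - sqrt \<bar>0\<bar>) (at (0::real))"
      by (intro tendsto_intros)
    have t2: "((\<lambda>x. 2 * \<bar>x\<bar> * l) \<longlongrightarrow> 2 * \<bar>0\<bar> * l) (at (0::real))"
      by (intro tendsto_intros)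
    have "(pfun l \<longlongrightarrow> 0) (at 0)"
      using tendsto_sandwich[OF lo hi] t1 t2 by simp
    then show ?thesis using 3 assms by (simp add: isCont_def pfun_alt)
  qed
qed

lemma mfun_upper: assumes "0 < l" shows "\<exists>lam. 0 < lam \<and> lam < (pi/l)^2 \<and> mfun l lam \<le> -M"
proof -
  define K where "K = \<bar>M\<bar> + 1"
  have K: "K \<ge> 1" "K \<ge> M" by (auto simp: K_def)
  define d where "d = min 1 (pi / (4 * l * K))"
  have d0: "0 < d" using assms K pi_gt_zero by (simp add: d_def)
  have d1: "d \<le> 1" by (simp add: d_def)
  have d2: "d \<le> pi / (4 * l * K)" by (simp add: d_def)
  define x where "x = pi - d"
  have x0: "2 \<le> x" using d1 pi_gt3 by (simp add: x_def)
  have xpi: "x < pi" using d0 by (simp add: x_def)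
  define lam where "lam = (x / l)^2"
  have lam0: "0 < lam" using x0 assms by (simp add: lam_def)
  have sl: "sqrt lam * l = x" using x0 assms by (simp add: lam_def)
  have lt: "lam < (pi/l)^2" unfolding lam_def using x0 xpi assms
    by (intro power_strict_mono divide_strict_right_mono) auto
  have sd: "0 < sin d" using d0 d1 pi_gt3 by (intro sin_gt_zero) auto
  have sd2: "sin d \<le> d" using d0 by (intro sin_x_le_x) auto
  have cd: "1/2 \<le> cos d"
  proof -
    have "1 - d^2/2 \<le> cos d" by (rule cos_ge_quad)
    moreover have "d^2 \<le> 1" using d0 d1 by (simp add: power_le_one)
    ultimately show ?thesis by linarith
  qed
  have "phi x = - (x * cos d / sin d)" by (simp add: phi_def x_def)
  moreover have "1 / d \<le> x * cos d / sin d"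
  proof -
    have "1 / d \<le> 1 / sin d" using sd sd2 by (intro divide_left_mono) auto
    also have "\<dots> \<le> (x * cos d) / sin d" 
    proof -
      have "2 * (1/2) \<le> x * cos d" using x0 cd by (intro mult_mono) auto
      then show ?thesis using sd by (intro divide_right_mono) auto
    qed
    finally show ?thesis .
  qed
  ultimately have p: "phi x \<le> - (1/d)" by linarith
  have "mfun l lam = phi x / l" using lam0 assms sl by (simp add: mfun_alt)
  also have "\<dots> \<le> - (1/d) / l" using p assms by (intro divide_right_mono) auto
  also have "\<dots> = - (1 / (d * l))" by simp
  also have "\<dots> \<le> - M"
  proof -
    have "d * l \<le> pi / (4 * K)" using d2 assms K by (simp add: field_simps)
    hence "4 * K / pi \<le> 1 / (d * l)" using d0 assms K pi_gt_zero
      by (simp add: field_simps)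
    moreover have "K \<le> 4 * K / pi" using K pi_less_4 pi_gt_zero by (simp add: field_simps)
    ultimately show ?thesis using K by linarith
  qed
  finally show ?thesis using lam0 lt by blast
qed

lemma pfun_upper: assumes "0 < l" shows "\<exists>lam. 0 < lam \<and> lam < (pi/(2*l))^2 \<and> M \<le> pfun l lam"
proof -
  define K where "K = \<bar>M\<bar> + 1"
  have K: "K \<ge> 1" "K \<ge> M" by (auto simp: K_def)
  define d where "d = min (1/2) (1 / (2 * l * K))"
  have d0: "0 < d" using assms K by (simp add: d_def)
  have d1: "d \<le> 1/2" by (simp add: d_def)
  have d2: "d \<le> 1 / (2 * l * K)" by (simp add: d_def)
  define x where "x = pi/2 - d"
  have x0: "1 \<le> x" using d1 pi_gt3 by (simp add: x_def)
  have xpi: "x < pi/2" using d0 by (simp add: x_def)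
  define lam where "lam = (x / l)^2"
  have lam0: "0 < lam" using x0 assms by (simp add: lam_def)
  have sl: "sqrt lam * l = x" using x0 assms by (simp add: lam_def)
  have sqx: "sqrt lam = x / l" using x0 assms by (simp add: lam_def)
  have "x / l < pi/(2*l)" using xpi assms by (simp add: field_simps)
  hence lt: "lam < (pi/(2*l))^2" unfolding lam_def using x0 assms
    by (intro power_strict_mono) auto
  have sd: "0 < sin d" using d0 d1 pi_gt3 by (intro sin_gt_zero) auto
  have sd2: "sin d \<le> d" using d0 by (intro sin_x_le_x) auto
  have cd: "1/2 \<le> cos d"
  proof -
    have "1 - d^2/2 \<le> cos d" by (rule cos_ge_quad)
    moreover have "d^2 \<le> 1" using d0 d1 by (simp add: power_le_one)
    ultimately show ?thesis by linarith
  qed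
  have tx: "tan x = cos d / sin d" by (simp add: x_def tan_def sin_diff cos_diff)
  have "1 / (2 * d) \<le> cos d / sin d"
  proof -
    have "1 / (2*d) \<le> (1/2) / sin d" using sd sd2 by (simp add: field_simps)
    also have "\<dots> \<le> cos d / sin d" using sd cd by (intro divide_right_mono) auto
    finally show ?thesis .
  qed
  hence t: "1 / (2 * d) \<le> tan x" using tx by simp
  have "K \<le> 1 / (2 * d * l)" using d2 d0 assms K by (simp add: field_simps)
  also have "\<dots> = (1/l) * (1 / (2 * d))" by simp
  also have "\<dots> \<le> (x / l) * tan x"
    using t x0 assms d0 by (intro mult_mono) (auto simp: divide_right_mono)
  also have "\<dots> = pfun l lam" using lam0 assms sl sqx by (simp add: pfun_alt)
  finally show ?thesis using lam0 lt K by (intro exI[of _ lam]) auto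
qed



definition Tm :: "(nat \<Rightarrow> real) \<Rightarrow> real" where
  "Tm l = Min ((\<lambda>e. (pi / l e)^2) ` {1..4::nat})"
definition Fsec :: "(nat \<Rightarrow> real) \<Rightarrow> real \<Rightarrow> real" where
  "Fsec l lam = - (\<Sum>e\<in>{1..4::nat}. mfun (l e) lam)"
definition T2 :: "(nat \<Rightarrow> real) \<Rightarrow> real" where
  "T2 l = min (Tm l) ((pi / (2 * l 0))^2)"
definition Hsec :: "(nat \<Rightarrow> real) \<Rightarrow> real \<Rightarrow> real" where
  "Hsec l lam = Fsec l lam + pfun (l 0) lam"

locale lpos =
  fixes l :: "nat \<Rightarrow> real"
  assumes lpos: "\<forall>i\<le>4. l i > 0"
begin

lemma lp: "e \<in> {1..4} \<Longrightarrow> 0 < l e" using lpos by auto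
lemma l0: "0 < l 0" using lpos by auto

lemma Tm_le: "e \<in> {1..4} \<Longrightarrow> Tm l \<le> (pi / l e)^2"
  unfolding Tm_def by (rule Min_le) auto

lemma Tm_ex: "\<exists>e\<in>{1..4}. Tm l = (pi / l e)^2"
proof -
  have "Tm l \<in> (\<lambda>e. (pi / l e)^2) ` {1..4::nat}" unfolding Tm_def by (rule Min_in) auto
  then show ?thesis by auto
qed

lemma Tm_pos: "0 < Tm l"
  using Tm_ex lp by fastforce

lemma T2_pos: "0 < T2 l" using Tm_pos l0 by (simp add: T2_def)

lemma Fsec_mono: assumes "a < b" "b < Tm l" shows "Fsec l a < Fsec l b"
proof -
  have "(\<Sum>e\<in>{1..4::nat}. mfun (l e) b) < (\<Sum>e\<in>{1..4::nat}. mfun (l e) a)"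
  proof (rule sum_strict_mono)
    fix e :: nat assume e: "e \<in> {1..4}"
    show "mfun (l e) b < mfun (l e) a" using lp[OF e] assms Tm_le[OF e] by (intro mfun_mono) auto
  qed auto
  then show ?thesis by (simp add: Fsec_def)
qed

lemma Fsec_isCont: assumes "b < Tm l" shows "isCont (Fsec l) b"
proof -
  have "isCont (\<lambda>lam. - (\<Sum>e\<in>{1..4::nat}. mfun (l e) lam)) b"
  proof (intro continuous_intros)
    fix e :: nat assume e: "e \<in> {1..4}"
    show "isCont (mfun (l e)) b" using lp[OF e] assms Tm_le[OF e] by (intro mfun_cont) auto
  qed
  then show ?thesis by (simp add: Fsec_def[abs_def])
qed

lemma Fsec_nonneg: assumes "0 \<le> lam" "lam < Tm l" shows "- (\<Sum>e\<in>{1..4::nat}. 1 / l e) \<le> Fsec l lam"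
proof -
  have "(\<Sum>e\<in>{1..4::nat}. mfun (l e) lam) \<le> (\<Sum>e\<in>{1..4::nat}. 1 / l e)"
  proof (rule sum_mono)
    fix e :: nat assume e: "e \<in> {1..4}"
    show "mfun (l e) lam \<le> 1 / l e"
    proof (cases "lam = 0")
      case True then show ?thesis using lp[OF e] by (simp add: mfun_alt)
    next
      case False
      then have "mfun (l e) lam < mfun (l e) 0" using lp[OF e] assms Tm_le[OF e] by (intro mfun_mono) auto
      then show ?thesis using lp[OF e] by (simp add: mfun_alt)
    qed
  qed
  then show ?thesis by (simp add: Fsec_def)
qed

lemma Fsec0: "Fsec l 0 < 0"
proof -
  have "0 < (\<Sum>e\<in>{1..4::nat}. mfun (l e) 0)"
    by (rule sum_pos) (auto simp: mfun_alt lp)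
  then show ?thesis by (simp add: Fsec_def)
qed

lemma Fsec_upper: "\<exists>lam. 0 < lam \<and> lam < Tm l \<and> g \<le> Fsec l lam"
proof -
  obtain e0 where e0: "e0 \<in> {1..4}" "Tm l = (pi / l e0)^2" using Tm_ex by blast
  define S1 where "S1 = (\<Sum>e\<in>{1..4::nat}. 1 / l e)"
  obtain lam where lam: "0 < lam" "lam < (pi / l e0)^2" "mfun (l e0) lam \<le> - (\<bar>g\<bar> + S1)"
    using mfun_upper[OF lp[OF e0(1)]] by blast
  have le: "mfun (l e) lam \<le> 1 / l e" if e: "e \<in> {1..4}" for e
  proof -
    have "mfun (l e) lam < mfun (l e) 0" using lp[OF e] lam e0 Tm_le[OF e] by (intro mfun_mono) auto
    then show ?thesis using lp[OF e] by (simp add: mfun_alt)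
  qed
  have "(\<Sum>e\<in>{1..4::nat}. mfun (l e) lam) = mfun (l e0) lam + (\<Sum>e\<in>{1..4::nat} - {e0}. mfun (l e) lam)"
    using e0 by (intro sum.remove) auto
  also have "(\<Sum>e\<in>{1..4::nat} - {e0}. mfun (l e) lam) \<le> (\<Sum>e\<in>{1..4::nat} - {e0}. 1 / l e)"
    using le by (intro sum_mono) auto
  also have "(\<Sum>e\<in>{1..4::nat} - {e0}. 1 / l e) \<le> S1"
  proof -
    have "S1 = 1 / l e0 + (\<Sum>e\<in>{1..4::nat} - {e0}. 1 / l e)"
      unfolding S1_def using e0 by (intro sum.remove) auto
    then show ?thesis using lp[OF e0(1)] by simp
  qed
  finally have "(\<Sum>e\<in>{1..4::nat}. mfun (l e) lam) \<le> - (\<bar>g\<bar> + S1) + S1" using lam by linarith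
  then have "g \<le> Fsec l lam" by (simp add: Fsec_def)
  then show ?thesis using lam e0 by auto
qed

lemma Fsec_lower: "\<exists>lam. lam < 0 \<and> Fsec l lam < g"
proof -
  define lam where "lam = - ((\<bar>g\<bar> + 1)^2)"
  have lam0: "lam < 0" by (simp add: lam_def add_pos_nonneg)
  have sq: "sqrt (-lam) = \<bar>g\<bar> + 1" by (simp add: lam_def)
  have "(\<Sum>e\<in>{1..4::nat}. \<bar>g\<bar> + 1) \<le> (\<Sum>e\<in>{1..4::nat}. mfun (l e) lam)"
    using mfun_le_neg[OF lp lam0] sq by (intro sum_mono) auto
  then have "4 * (\<bar>g\<bar> + 1) \<le> (\<Sum>e\<in>{1..4::nat}. mfun (l e) lam)" by simp
  then have "Fsec l lam < g" by (simp add: Fsec_def)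
  then show ?thesis using lam0 by blast
qed

lemma Fsec_root: "\<exists>r. r < Tm l \<and> Fsec l r = g"
proof -
  obtain a where a: "a < 0" "Fsec l a < g" using Fsec_lower by blast
  obtain b where b: "0 < b" "b < Tm l" "g \<le> Fsec l b" using Fsec_upper by blast
  have "continuous_on {a..b} (Fsec l)"
    using b by (intro continuous_at_imp_continuous_on) (auto intro!: Fsec_isCont)
  then obtain r where "a \<le> r" "r \<le> b" "Fsec l r = g"
    using IVT'[of "Fsec l" a g b] a b by auto
  then show ?thesis using b by (intro exI[of _ r]) auto
qed

lemma Fsec_inj: "a < Tm l \<Longrightarrow> b < Tm l \<Longrightarrow> Fsec l a = Fsec l b \<Longrightarrow> a = b"
  using Fsec_mono by (metis less_irrefl linorder_neqE_linordered_idom)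

lemma Fsec_pos_root: "r < Tm l \<Longrightarrow> Fsec l r = 0 \<Longrightarrow> 0 < r"
  using Fsec0 Fsec_mono[of r 0] Tm_pos by (cases "r \<le> 0") (auto simp: less_le)

lemma Hsec_mono: assumes "a < b" "b < T2 l" shows "Hsec l a < Hsec l b"
proof -
  have "Fsec l a < Fsec l b" using assms by (intro Fsec_mono) (auto simp: T2_def)
  moreover have "pfun (l 0) a < pfun (l 0) b" using assms l0 by (intro pfun_mono) (auto simp: T2_def)
  ultimately show ?thesis by (simp add: Hsec_def)
qed

lemma Hsec_inj: "a < T2 l \<Longrightarrow> b < T2 l \<Longrightarrow> Hsec l a = Hsec l b \<Longrightarrow> a = b"
  using Hsec_mono by (metis less_irrefl linorder_neqE_linordered_idom)

lemma Hsec_root: "\<exists>r. 0 < r \<and> r < T2 l \<and> Hsec l r = 0"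
proof -
  have h0: "Hsec l 0 < 0" using Fsec0 l0 by (simp add: Hsec_def pfun_alt)
  define S1 where "S1 = (\<Sum>e\<in>{1..4::nat}. 1 / l e)"
  have "\<exists>b. 0 < b \<and> b < T2 l \<and> 0 \<le> Hsec l b"
  proof (cases "Tm l \<le> (pi / (2 * l 0))^2")
    case True
    obtain b where b: "0 < b" "b < Tm l" "1 \<le> Fsec l b" using Fsec_upper by blast
    have "0 < pfun (l 0) b" using b True l0 by (intro pfun_pos) auto
    then show ?thesis using b True by (intro exI[of _ b]) (auto simp: T2_def Hsec_def)
  next
    case False
    obtain b where b: "0 < b" "b < (pi / (2 * l 0))^2" "S1 \<le> pfun (l 0) b"
      using pfun_upper[OF l0] by blast
    have "- S1 \<le> Fsec l b" unfolding S1_def using b False by (intro Fsec_nonneg) auto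
    then show ?thesis using b False by (intro exI[of _ b]) (auto simp: T2_def Hsec_def)
  qed
  then obtain b where b: "0 < b" "b < T2 l" "0 \<le> Hsec l b" by blast
  have "continuous_on {0..b} (Hsec l)"
  proof (intro continuous_at_imp_continuous_on ballI)
    fix x assume x: "x \<in> {0..b}"
    have "isCont (\<lambda>x. Fsec l x + pfun (l 0) x) x"
      using x b l0 by (intro continuous_intros Fsec_isCont pfun_cont) (auto simp: T2_def)
    then show "isCont (Hsec l) x" by (simp add: Hsec_def[abs_def])
  qed
  then obtain r where r: "0 \<le> r" "r \<le> b" "Hsec l r = 0"
    using IVT'[of "Hsec l" 0 0 b] h0 b by auto
  have "r \<noteq> 0" using r h0 by auto
  then show ?thesis using r b by (intro exI[of _ r]) auto
qed

end



lemma edge_out: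
  assumes der: "\<forall>x\<in>{0..L}. (f has_real_derivative g x) (at x within {0..L}) \<and>
        (g has_real_derivative (- lam * f x)) (at x within {0..L})"
    and L: "0 < L" "lam < (pi/L)^2" and f0: "f 0 = c" and fL: "f L = 0"
  shows "g 0 = - c * mfun L lam \<and> (c = 0 \<longrightarrow> (\<forall>x\<in>{0..L}. f x = 0))"
proof -
  have S: "0 < Sf lam L" using Sf_pos L by auto
  have "f L = f 0 * Cf lam L + g 0 * Sf lam L" using ode_rep[OF der, of L] L by auto
  hence "g 0 * Sf lam L = - c * Cf lam L" using f0 fL by simp
  hence g0: "g 0 = - c * mfun L lam" using S by (simp add: mfun_def field_simps)
  have "c = 0 \<longrightarrow> (\<forall>x\<in>{0..L}. f x = 0)"
  proof (intro impI ballI)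
    fix x assume "c = 0" "x \<in> {0..L}"
    then show "f x = 0" using ode_rep[OF der, of x] g0 f0 by simp
  qed
  then show ?thesis using g0 by blast
qed

lemma edge_in:
  assumes der: "\<forall>x\<in>{0..L}. (f has_real_derivative g x) (at x within {0..L}) \<and>
        (g has_real_derivative (- lam * f x)) (at x within {0..L})"
    and L: "0 < L" "lam < (pi/L)^2" and f0: "f 0 = 0" and fL: "f L = c"
  shows "g L = c * mfun L lam \<and> (c = 0 \<longrightarrow> (\<forall>x\<in>{0..L}. f x = 0))"
proof -
  have S: "0 < Sf lam L" using Sf_pos L by auto
  have r: "f L = f 0 * Cf lam L + g 0 * Sf lam L \<and> g L = - lam * f 0 * Sf lam L + g 0 * Cf lam L"
    using ode_rep[OF der, of L] L by auto
  hence "g 0 = c / Sf lam L" using f0 fL S by (simp add: field_simps)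
  hence gL: "g L = c * mfun L lam" using r f0 by (simp add: mfun_def)
  have "c = 0 \<longrightarrow> (\<forall>x\<in>{0..L}. f x = 0)"
  proof (intro impI ballI)
    fix x assume "c = 0" "x \<in> {0..L}"
    then show "f x = 0" using ode_rep[OF der, of x] \<open>g 0 = c / Sf lam L\<close> f0 by simp
  qed
  then show ?thesis using gL by blast
qed

lemma pendant:
  assumes der: "\<forall>x\<in>{0..L}. (f has_real_derivative g x) (at x within {0..L}) \<and>
        (g has_real_derivative (- lam * f x)) (at x within {0..L})"
    and L: "0 < L" "lam < (pi/(2*L))^2" and g0: "g 0 = 0" and fL: "f L = c"
  shows "g L = - c * pfun L lam \<and> (c = 0 \<longrightarrow> (\<forall>x\<in>{0..L}. f x = 0))"
proof -
  have C: "0 < Cf lam L" using Cf_pos L by auto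
  have r: "f L = f 0 * Cf lam L + g 0 * Sf lam L \<and> g L = - lam * f 0 * Sf lam L + g 0 * Cf lam L"
    using ode_rep[OF der, of L] L by auto
  hence f0: "f 0 = c / Cf lam L" using g0 fL C by (simp add: field_simps)
  hence gL: "g L = - c * pfun L lam" using r g0 by (simp add: pfun_def)
  have "c = 0 \<longrightarrow> (\<forall>x\<in>{0..L}. f x = 0)"
  proof (intro impI ballI)
    fix x assume "c = 0" "x \<in> {0..L}"
    then show "f x = 0" using ode_rep[OF der, of x] f0 g0 by simp
  qed
  then show ?thesis using gL by blast
qed

lemma sol_deriv:
  "((\<lambda>x. a * Cf lam x + b * Sf lam x) has_real_derivative (- lam * a * Sf lam x + b * Cf lam x)) (at x within X)"
  "((\<lambda>x. - lam * a * Sf lam x + b * Cf lam x) has_real_derivative (- lam * (a * Cf lam x + b * Sf lam x))) (at x within X)"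
  by (auto intro!: derivative_eq_intros Cf_deriv Sf_deriv simp: algebra_simps)

context lpos begin

abbreviation "G1B gA gB \<equiv> dirichlet_at VB (Gamma1 l gA gB)"
abbreviation "G1A gA gB \<equiv> dirichlet_at VA (Gamma1 l gA gB)"
abbreviation "G2B \<equiv> dirichlet_at VB (Gamma2 l)"
abbreviation "G2A \<equiv> dirichlet_at VA (Gamma2 l)"

lemma G1B_char:
  assumes "is_eigenvalue (G1B gA gB) lam" "lam < Tm l"
  shows "Fsec l lam = gA"
proof -
  obtain f g where der: "\<forall>e\<in>{1..4}. \<forall>x\<in>{0..l e}.
        (f e has_real_derivative g e x) (at x within {0..l e}) \<and>
        (g e has_real_derivative (- lam * f e x)) (at x within {0..l e})"
    and nz: "\<exists>e\<in>{1..4}. \<exists>x\<in>{0..l e}. f e x \<noteq> 0"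
    and vA: "vertex_ok (G1B gA gB) f g VA" and vB: "vertex_ok (G1B gA gB) f g VB"
  proof -
    have e: "edges (G1B gA gB) = {1..4}" "len (G1B gA gB) = l" by (simp_all add: dirichlet_at_def Gamma1_def)
    show ?thesis using assms(1) that unfolding is_eigenvalue_def e by blast
  qed
  obtain c where cA: "\<forall>e\<in>{1..4}. f e 0 = c" and fl: "(\<Sum>e\<in>{1..4}. g e 0) = gA * c"
    using vA by (auto simp: vertex_ok_def dirichlet_at_def Gamma1_def vals_at_def flux_at_def)
  have fB: "\<forall>e\<in>{1..4}. f e (l e) = 0"
    using vB by (auto simp: vertex_ok_def dirichlet_at_def Gamma1_def vals_at_def)
  have E: "g e 0 = - c * mfun (l e) lam \<and> (c = 0 \<longrightarrow> (\<forall>x\<in>{0..l e}. f e x = 0))" if e: "e \<in> {1..4}" for e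
    using der e cA fB lp[OF e] Tm_le[OF e] assms(2) by (intro edge_out) auto
  have "(\<Sum>e\<in>{1..4}. g e 0) = (\<Sum>e\<in>{1..4}. - (c * mfun (l e) lam))"
    by (rule sum.cong) (use E in auto)
  also have "\<dots> = c * Fsec l lam" by (simp add: Fsec_def sum_distrib_left sum_negf)
  finally have "(\<Sum>e\<in>{1..4}. g e 0) = c * Fsec l lam" .
  hence "c * Fsec l lam = c * gA" using fl by simp
  moreover have "c \<noteq> 0" using E nz by blast
  ultimately show ?thesis by simp
qed

lemma G1A_char:
  assumes "is_eigenvalue (G1A gA gB) lam" "lam < Tm l"
  shows "Fsec l lam = gB"
proof -
  obtain f g where der: "\<forall>e\<in>{1..4}. \<forall>x\<in>{0..l e}.
        (f e has_real_derivative g e x) (at x within {0..l e}) \<and>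
        (g e has_real_derivative (- lam * f e x)) (at x within {0..l e})"
    and nz: "\<exists>e\<in>{1..4}. \<exists>x\<in>{0..l e}. f e x \<noteq> 0"
    and vA: "vertex_ok (G1A gA gB) f g VA" and vB: "vertex_ok (G1A gA gB) f g VB"
  proof -
    have e: "edges (G1A gA gB) = {1..4}" "len (G1A gA gB) = l" by (simp_all add: dirichlet_at_def Gamma1_def)
    show ?thesis using assms(1) that unfolding is_eigenvalue_def e by blast
  qed
  obtain c where cB: "\<forall>e\<in>{1..4}. f e (l e) = c" and fl: "(\<Sum>e\<in>{1..4}. - g e (l e)) = gB * c"
    using vB by (auto simp: vertex_ok_def dirichlet_at_def Gamma1_def vals_at_def flux_at_def)
  have fA: "\<forall>e\<in>{1..4}. f e 0 = 0"
    using vA by (auto simp: vertex_ok_def dirichlet_at_def Gamma1_def vals_at_def)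
  have E: "g e (l e) = c * mfun (l e) lam \<and> (c = 0 \<longrightarrow> (\<forall>x\<in>{0..l e}. f e x = 0))" if e: "e \<in> {1..4}" for e
    using der e cB fA lp[OF e] Tm_le[OF e] assms(2) by (intro edge_in) auto
  have "(\<Sum>e\<in>{1..4}. - g e (l e)) = c * Fsec l lam"
    using E by (simp add: Fsec_def sum_distrib_left sum_negf)
  hence "c * Fsec l lam = c * gB" using fl by simp
  moreover have "c \<noteq> 0" using E nz by blast
  ultimately show ?thesis by simp
qed

end



lemma eig_intro:
  assumes "\<exists>e\<in>edges G. \<exists>x\<in>{0..len G e}. A e * Cf lam x + B e * Sf lam x \<noteq> 0"
    and "\<And>v. vertex_ok G (\<lambda>e x. A e * Cf lam x + B e * Sf lam x) (\<lambda>e x. - lam * A e * Sf lam x + B e * Cf lam x) v"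
  shows "is_eigenvalue G lam"
  unfolding is_eigenvalue_def
  by (rule exI[of _ "\<lambda>e x. A e * Cf lam x + B e * Sf lam x"],
      rule exI[of _ "\<lambda>e x. - lam * A e * Sf lam x + B e * Cf lam x"]) (use assms sol_deriv in auto)


lemma set04: "{0..4::nat} = insert 0 {1..4}" by auto

lemma flux_G2:
  "flux_at (dirichlet_at v (Gamma2 l)) g VA = - g 0 (l 0) + (\<Sum>e\<in>{1..4}. g e 0)"
  "flux_at (dirichlet_at v (Gamma2 l)) g VB = (\<Sum>e\<in>{1..4}. - g e (l e))"
  "flux_at (dirichlet_at v (Gamma2 l)) g VC = g 0 0"
proof -
  have "flux_at (dirichlet_at v (Gamma2 l)) g VA = - g 0 (l 0) + (\<Sum>e\<in>{1..4}. (if (if e = 0 then VC else VA) = VA then g e 0 else 0) + (if (if e = 0 then VA else VB) = VA then - g e (l e) else 0))"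
    unfolding flux_at_def by (simp add: dirichlet_at_def Gamma2_def set04)
  also have "(\<Sum>e\<in>{1..4}. (if (if e = 0 then VC else VA) = VA then g e 0 else 0) + (if (if e = 0 then VA else VB) = VA then - g e (l e) else 0)) = (\<Sum>e\<in>{1..4::nat}. g e 0)"
    by (rule sum.cong) auto
  finally show "flux_at (dirichlet_at v (Gamma2 l)) g VA = - g 0 (l 0) + (\<Sum>e\<in>{1..4}. g e 0)" .
  have "flux_at (dirichlet_at v (Gamma2 l)) g VB = 0 + (\<Sum>e\<in>{1..4}. (if (if e = 0 then VC else VA) = VB then g e 0 else 0) + (if (if e = 0 then VA else VB) = VB then - g e (l e) else 0))"
    unfolding flux_at_def by (simp add: dirichlet_at_def Gamma2_def set04)
  also have "(\<Sum>e\<in>{1..4}. (if (if e = 0 then VC else VA) = VB then g e 0 else 0) + (if (if e = 0 then VA else VB) = VB then - g e (l e) else 0)) = (\<Sum>e\<in>{1..4::nat}. - g e (l e))"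
    by (rule sum.cong) auto
  finally show "flux_at (dirichlet_at v (Gamma2 l)) g VB = (\<Sum>e\<in>{1..4}. - g e (l e))" by simp
  have "flux_at (dirichlet_at v (Gamma2 l)) g VC = g 0 0 + (\<Sum>e\<in>{1..4}. (if (if e = 0 then VC else VA) = VC then g e 0 else 0) + (if (if e = 0 then VA else VB) = VC then - g e (l e) else 0))"
    unfolding flux_at_def by (simp add: dirichlet_at_def Gamma2_def set04)
  also have "(\<Sum>e\<in>{1..4}. (if (if e = 0 then VC else VA) = VC then g e 0 else 0) + (if (if e = 0 then VA else VB) = VC then - g e (l e) else 0)) = (\<Sum>e\<in>{1..4::nat}. 0::real)"
    by (rule sum.cong) auto
  finally show "flux_at (dirichlet_at v (Gamma2 l)) g VC = g 0 0" by simp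
qed

lemma flux_G1:
  "flux_at (dirichlet_at v (Gamma1 l gA gB)) g VA = (\<Sum>e\<in>{1..4}. g e 0)"
  "flux_at (dirichlet_at v (Gamma1 l gA gB)) g VB = (\<Sum>e\<in>{1..4}. - g e (l e))"
  "flux_at (dirichlet_at v (Gamma1 l gA gB)) g VC = 0"
  unfolding flux_at_def by (simp_all add: dirichlet_at_def Gamma1_def)

lemma vals_G1:
  "vals_at (dirichlet_at v (Gamma1 l gA gB)) f VA c \<longleftrightarrow> (\<forall>e\<in>{1..4}. f e 0 = c)"
  "vals_at (dirichlet_at v (Gamma1 l gA gB)) f VB c \<longleftrightarrow> (\<forall>e\<in>{1..4}. f e (l e) = c)"
  "vals_at (dirichlet_at v (Gamma1 l gA gB)) f VC c"
  unfolding vals_at_def by (simp_all add: dirichlet_at_def Gamma1_def)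

lemma vals_G2:
  "vals_at (dirichlet_at v (Gamma2 l)) f VA c \<longleftrightarrow> (\<forall>e\<in>{1..4}. f e 0 = c) \<and> f 0 (l 0) = c"
  "vals_at (dirichlet_at v (Gamma2 l)) f VB c \<longleftrightarrow> (\<forall>e\<in>{1..4}. f e (l e) = c)"
  "vals_at (dirichlet_at v (Gamma2 l)) f VC c \<longleftrightarrow> f 0 0 = c"
  unfolding vals_at_def by (auto simp: dirichlet_at_def Gamma2_def)

lemma cond_G:
  "cond (dirichlet_at VB (Gamma1 l gA gB)) VA = Delta gA"
  "cond (dirichlet_at VB (Gamma1 l gA gB)) VB = Dirichlet"
  "cond (dirichlet_at VB (Gamma1 l gA gB)) VC = Delta 0"
  "cond (dirichlet_at VA (Gamma1 l gA gB)) VA = Dirichlet"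
  "cond (dirichlet_at VA (Gamma1 l gA gB)) VB = Delta gB"
  "cond (dirichlet_at VA (Gamma1 l gA gB)) VC = Delta 0"
  "cond (dirichlet_at VB (Gamma2 l)) VA = Delta 0"
  "cond (dirichlet_at VB (Gamma2 l)) VB = Dirichlet"
  "cond (dirichlet_at VB (Gamma2 l)) VC = Delta 0"
  "cond (dirichlet_at VA (Gamma2 l)) VA = Dirichlet"
  "cond (dirichlet_at VA (Gamma2 l)) VB = Delta 0"
  "cond (dirichlet_at VA (Gamma2 l)) VC = Delta 0"
  by (simp_all add: dirichlet_at_def Gamma1_def Gamma2_def)

lemma eg:
  "edges (dirichlet_at v (Gamma1 l gA gB)) = {1..4}" "len (dirichlet_at v (Gamma1 l gA gB)) = l"
  "edges (dirichlet_at v (Gamma2 l)) = {0..4}" "len (dirichlet_at v (Gamma2 l)) = l"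
  by (simp_all add: dirichlet_at_def Gamma1_def Gamma2_def)

context lpos begin

lemma G1B_exists:
  assumes "lam < Tm l" "Fsec l lam = gA"
  shows "is_eigenvalue (G1B gA gB) lam"
proof (rule eig_intro[where A = "\<lambda>e. 1" and B = "\<lambda>e. - mfun (l e) lam"])
  show "\<exists>e\<in>edges (G1B gA gB). \<exists>x\<in>{0..len (G1B gA gB) e}. 1 * Cf lam x + - mfun (l e) lam * Sf lam x \<noteq> 0"
    using lp[of 1] by (intro bexI[where x=1] bexI[where x=0]) (auto simp: eg)
  fix v show "vertex_ok (G1B gA gB) (\<lambda>e x. 1 * Cf lam x + - mfun (l e) lam * Sf lam x)
        (\<lambda>e x. - lam * 1 * Sf lam x + - mfun (l e) lam * Cf lam x) v"
  proof (cases v)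
    case VA
    have "(\<Sum>e\<in>{1..4}. - mfun (l e) lam) = gA" using assms by (simp add: Fsec_def sum_negf)
    then show ?thesis using VA by (auto simp: vertex_ok_def cond_G vals_G1 flux_G1)
  next
    case VB
    have "Cf lam (l e) - mfun (l e) lam * Sf lam (l e) = 0" if e: "e \<in> {1..4}" for e
      using Sf_pos[OF lp[OF e], of lam] Tm_le[OF e] assms by (simp add: mfun_def)
    then show ?thesis using VB by (auto simp: vertex_ok_def cond_G vals_G1 flux_G1)
  next
    case VC
    then show ?thesis by (auto simp: vertex_ok_def cond_G vals_G1 flux_G1)
  qed
qed

lemma G1A_exists:
  assumes "lam < Tm l" "Fsec l lam = gB"
  shows "is_eigenvalue (G1A gA gB) lam"
proof (rule eig_intro[where A = "\<lambda>e. 0" and B = "\<lambda>e. 1 / Sf lam (l e)"])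
  have S: "0 < Sf lam (l e)" if e: "e \<in> {1..4}" for e
    using Sf_pos[OF lp[OF e], of lam] Tm_le[OF e] assms by simp
  show "\<exists>e\<in>edges (G1A gA gB). \<exists>x\<in>{0..len (G1A gA gB) e}. 0 * Cf lam x + 1 / Sf lam (l e) * Sf lam x \<noteq> 0"
    using lp[of 1] S[of 1] by (intro bexI[where x=1] bexI[where x="l 1"]) (auto simp: eg)
  fix v show "vertex_ok (G1A gA gB) (\<lambda>e x. 0 * Cf lam x + 1 / Sf lam (l e) * Sf lam x)
        (\<lambda>e x. - lam * 0 * Sf lam x + 1 / Sf lam (l e) * Cf lam x) v"
  proof (cases v)
    case VA
    then show ?thesis by (auto simp: vertex_ok_def cond_G vals_G1 flux_G1)
  next
    case VB
    have "(\<Sum>e\<in>{1..4}. - (1 / Sf lam (l e) * Cf lam (l e))) = gB" using assms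
      by (simp add: Fsec_def sum_negf mfun_def)
    moreover have "\<forall>e\<in>{1..4}. 1 / Sf lam (l e) * Sf lam (l e) = 1"
    proof
      fix e :: nat assume "e \<in> {1..4}"
      from S[OF this] show "1 / Sf lam (l e) * Sf lam (l e) = 1" by simp
    qed
    ultimately show ?thesis using VB
      by (auto simp: vertex_ok_def cond_G vals_G1 flux_G1 intro!: exI[of _ 1])
  next
    case VC
    then show ?thesis by (auto simp: vertex_ok_def cond_G vals_G1 flux_G1)
  qed
qed

end



context lpos begin

lemma T2_le: "T2 l \<le> Tm l" "T2 l \<le> (pi / (2 * l 0))^2" by (auto simp: T2_def)

lemma G2B_char:
  assumes "is_eigenvalue G2B lam" "lam < T2 l"
  shows "Hsec l lam = 0"
proof -
  obtain f g where der: "\<forall>e\<in>{0..4}. \<forall>x\<in>{0..l e}.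
        (f e has_real_derivative g e x) (at x within {0..l e}) \<and>
        (g e has_real_derivative (- lam * f e x)) (at x within {0..l e})"
    and nz: "\<exists>e\<in>{0..4}. \<exists>x\<in>{0..l e}. f e x \<noteq> 0"
    and vA: "vertex_ok G2B f g VA" and vB: "vertex_ok G2B f g VB" and vC: "vertex_ok G2B f g VC"
    using assms(1) unfolding is_eigenvalue_def eg by blast
  obtain c where cA: "\<forall>e\<in>{1..4}. f e 0 = c" "f 0 (l 0) = c"
      and fl: "- g 0 (l 0) + (\<Sum>e\<in>{1..4}. g e 0) = 0"
    using vA by (auto simp: vertex_ok_def cond_G vals_G2 flux_G2)
  have fB: "\<forall>e\<in>{1..4}. f e (l e) = 0"
    using vB by (auto simp: vertex_ok_def cond_G vals_G2)
  have g00: "g 0 0 = 0"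
    using vC by (auto simp: vertex_ok_def cond_G vals_G2 flux_G2)
  have P: "g 0 (l 0) = - c * pfun (l 0) lam \<and> (c = 0 \<longrightarrow> (\<forall>x\<in>{0..l 0}. f 0 x = 0))"
    using der g00 cA l0 T2_le assms(2) by (intro pendant) auto
  have E: "g e 0 = - c * mfun (l e) lam \<and> (c = 0 \<longrightarrow> (\<forall>x\<in>{0..l e}. f e x = 0))" if e: "e \<in> {1..4}" for e
    using der e cA fB lp[OF e] Tm_le[OF e] T2_le assms(2) by (intro edge_out) auto
  have "(\<Sum>e\<in>{1..4}. g e 0) = (\<Sum>e\<in>{1..4}. - (c * mfun (l e) lam))"
    by (rule sum.cong) (use E in auto)
  also have "\<dots> = c * Fsec l lam" by (simp add: Fsec_def sum_distrib_left sum_negf)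
  finally have "c * Hsec l lam = 0" using fl P by (simp add: Hsec_def algebra_simps)
  moreover have "c \<noteq> 0"
  proof
    assume c: "c = 0"
    obtain e x where ex: "e \<in> {0..4}" "x \<in> {0..l e}" "f e x \<noteq> 0" using nz by blast
    show False
    proof (cases "e = 0")
      case True then show False using P c ex by auto
    next
      case False then have "e \<in> {1..4}" using ex by auto
      then show False using E c ex by auto
    qed
  qed
  ultimately show ?thesis by simp
qed

lemma G2A_char:
  assumes "is_eigenvalue G2A lam" "lam < T2 l"
  shows "Fsec l lam = 0"
proof -
  obtain f g where der: "\<forall>e\<in>{0..4}. \<forall>x\<in>{0..l e}.
        (f e has_real_derivative g e x) (at x within {0..l e}) \<and>
        (g e has_real_derivative (- lam * f e x)) (at x within {0..l e})"
    and nz: "\<exists>e\<in>{0..4}. \<exists>x\<in>{0..l e}. f e x \<noteq> 0"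
    and vA: "vertex_ok G2A f g VA" and vB: "vertex_ok G2A f g VB" and vC: "vertex_ok G2A f g VC"
    using assms(1) unfolding is_eigenvalue_def eg by blast
  have fA: "\<forall>e\<in>{1..4}. f e 0 = 0" "f 0 (l 0) = 0"
    using vA by (auto simp: vertex_ok_def cond_G vals_G2)
  obtain c where cB: "\<forall>e\<in>{1..4}. f e (l e) = c"
      and fl: "(\<Sum>e\<in>{1..4}. - g e (l e)) = 0"
    using vB by (auto simp: vertex_ok_def cond_G vals_G2 flux_G2)
  have g00: "g 0 0 = 0"
    using vC by (auto simp: vertex_ok_def cond_G vals_G2 flux_G2)
  have P: "g 0 (l 0) = - 0 * pfun (l 0) lam \<and> (0 = (0::real) \<longrightarrow> (\<forall>x\<in>{0..l 0}. f 0 x = 0))"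
    using der g00 fA l0 T2_le assms(2) by (intro pendant) auto
  have E: "g e (l e) = c * mfun (l e) lam \<and> (c = 0 \<longrightarrow> (\<forall>x\<in>{0..l e}. f e x = 0))" if e: "e \<in> {1..4}" for e
    using der e cB fA lp[OF e] Tm_le[OF e] T2_le assms(2) by (intro edge_in) auto
  have "(\<Sum>e\<in>{1..4}. - g e (l e)) = (\<Sum>e\<in>{1..4}. - (c * mfun (l e) lam))"
    by (rule sum.cong) (use E in auto)
  also have "\<dots> = c * Fsec l lam" by (simp add: Fsec_def sum_distrib_left sum_negf)
  finally have "c * Fsec l lam = 0" using fl by simp
  moreover have "c \<noteq> 0"
  proof
    assume c: "c = 0"
    obtain e x where ex: "e \<in> {0..4}" "x \<in> {0..l e}" "f e x \<noteq> 0" using nz by blast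
    show False
    proof (cases "e = 0")
      case True then show False using P c ex by auto
    next
      case False then have "e \<in> {1..4}" using ex by auto
      then show False using E c ex by auto
    qed
  qed
  ultimately show ?thesis by simp
qed

lemma G2B_exists:
  assumes "lam < T2 l" "Hsec l lam = 0"
  shows "is_eigenvalue G2B lam"
proof (rule eig_intro[where A = "\<lambda>e. if e = 0 then 1 / Cf lam (l 0) else 1"
      and B = "\<lambda>e. if e = 0 then 0 else - mfun (l e) lam"])
  have C: "0 < Cf lam (l 0)" using Cf_pos[OF l0, of lam] T2_le assms by simp
  show "\<exists>e\<in>edges G2B. \<exists>x\<in>{0..len G2B e}. (if e = 0 then 1 / Cf lam (l 0) else 1) * Cf lam x +
      (if e = 0 then 0 else - mfun (l e) lam) * Sf lam x \<noteq> 0"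
    using lp[of 1] by (intro bexI[where x=1] bexI[where x=0]) (auto simp: eg)
  fix v show "vertex_ok G2B (\<lambda>e x. (if e = 0 then 1 / Cf lam (l 0) else 1) * Cf lam x +
      (if e = 0 then 0 else - mfun (l e) lam) * Sf lam x)
      (\<lambda>e x. - lam * (if e = 0 then 1 / Cf lam (l 0) else 1) * Sf lam x +
      (if e = 0 then 0 else - mfun (l e) lam) * Cf lam x) v"
  proof (cases v)
    case VA
    have "(\<Sum>e\<in>{1..4}. - lam * (if e = 0 then 1 / Cf lam (l 0) else 1) * Sf lam 0 +
      (if e = 0 then 0 else - mfun (l e) lam) * Cf lam 0) = (\<Sum>e\<in>{1..4}. - mfun (l e) lam)"
      by (rule sum.cong) auto
    also have "\<dots> = Fsec l lam" by (simp add: Fsec_def sum_negf)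
    finally have s: "(\<Sum>e\<in>{1..4}. - lam * (if e = 0 then 1 / Cf lam (l 0) else 1) * Sf lam 0 +
      (if e = 0 then 0 else - mfun (l e) lam) * Cf lam 0) = Fsec l lam" .
    have "- (- lam * (1 / Cf lam (l 0)) * Sf lam (l 0) + 0 * Cf lam (l 0)) = pfun (l 0) lam"
      by (simp add: pfun_def)
    then have fl: "- (- lam * (1 / Cf lam (l 0)) * Sf lam (l 0) + 0 * Cf lam (l 0)) + Fsec l lam = 0"
      using assms by (simp add: Hsec_def)
    have fl2: "lam * Sf lam (l 0) / Cf lam (l 0) + (\<Sum>e\<in>{1..4}. - mfun (l e) lam) = 0"
      using assms by (simp add: Hsec_def Fsec_def pfun_def sum_negf)
    show ?thesis using VA C fl2
      by (simp add: vertex_ok_def cond_G vals_G2 flux_G2 s fl del: mult_minus_left)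
  next
    case VB
    have "Cf lam (l e) - mfun (l e) lam * Sf lam (l e) = 0" if e: "e \<in> {1..4}" for e
      using Sf_pos[OF lp[OF e], of lam] Tm_le[OF e] T2_le assms by (simp add: mfun_def)
    then show ?thesis using VB by (auto simp: vertex_ok_def cond_G vals_G2 flux_G2)
  next
    case VC
    then show ?thesis by (auto simp: vertex_ok_def cond_G vals_G2 flux_G2)
  qed
qed

lemma G2A_exists:
  assumes "lam < Tm l" "Fsec l lam = 0"
  shows "is_eigenvalue G2A lam"
proof (rule eig_intro[where A = "\<lambda>e. 0" and B = "\<lambda>e. if e = 0 then 0 else 1 / Sf lam (l e)"])
  have S: "0 < Sf lam (l e)" if e: "e \<in> {1..4}" for e
    using Sf_pos[OF lp[OF e], of lam] Tm_le[OF e] assms by simp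
  show "\<exists>e\<in>edges G2A. \<exists>x\<in>{0..len G2A e}. 0 * Cf lam x + (if e = 0 then 0 else 1 / Sf lam (l e)) * Sf lam x \<noteq> 0"
    using lp[of 1] S[of 1] by (intro bexI[where x=1] bexI[where x="l 1"]) (auto simp: eg)
  fix v show "vertex_ok G2A (\<lambda>e x. 0 * Cf lam x + (if e = 0 then 0 else 1 / Sf lam (l e)) * Sf lam x)
        (\<lambda>e x. - lam * 0 * Sf lam x + (if e = 0 then 0 else 1 / Sf lam (l e)) * Cf lam x) v"
  proof (cases v)
    case VA
    then show ?thesis by (auto simp: vertex_ok_def cond_G vals_G2 flux_G2)
  next
    case VB
    have "(\<Sum>e\<in>{1..4}. - (- lam * 0 * Sf lam (l e) + (if e = 0 then 0 else 1 / Sf lam (l e)) * Cf lam (l e)))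
        = (\<Sum>e\<in>{1..4}. - mfun (l e) lam)"
      by (rule sum.cong) (auto simp: mfun_def)
    also have "\<dots> = 0" using assms by (simp add: Fsec_def sum_negf)
    finally have fl: "(\<Sum>e\<in>{1..4}. - (- lam * 0 * Sf lam (l e) + (if e = 0 then 0 else 1 / Sf lam (l e)) * Cf lam (l e))) = 0" .
    have "\<forall>e\<in>{1..4}. 0 * Cf lam (l e) + (if e = 0 then 0 else 1 / Sf lam (l e)) * Sf lam (l e) = 1"
    proof
      fix e :: nat assume "e \<in> {1..4}"
      from S[OF this] this show "0 * Cf lam (l e) + (if e = 0 then 0 else 1 / Sf lam (l e)) * Sf lam (l e) = 1" by auto
    qed
    then show ?thesis using VB fl
      by (simp add: vertex_ok_def cond_G vals_G2 flux_G2 del: mult_minus_left)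
  next
    case VC
    then show ?thesis by (auto simp: vertex_ok_def cond_G vals_G2 flux_G2)
  qed
qed

end

lemma inf_compare:
  fixes SA SB :: "real set"
  assumes "mu \<in> SB" "\<forall>x\<in>SB. mu \<le> x" "nu \<in> SA" "\<forall>x\<in>SA. b \<le> x" "mu < b"
  shows "Inf SB < Inf SA"
proof -
  have "Inf SB = mu" using assms by (intro cInf_eq_minimum) auto
  moreover have "b \<le> Inf SA" using assms by (intro cInf_greatest) auto
  ultimately show ?thesis using assms by linarith
qed

theorem lemma4p1:
  fixes l :: "nat \<Rightarrow> real" and gA gB :: real and G :: qgraph
  assumes "\<forall>i\<le>4. l i > 0"
    and "(G = Gamma1 l gA gB \<and> gA < gB) \<or> G = Gamma2 l"
  shows "lambda1 (dirichlet_at VB G) < lambda1 (dirichlet_at VA G)"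
proof -
  interpret lpos l using assms(1) by unfold_locales
  show ?thesis
  proof (cases "G = Gamma1 l gA gB \<and> gA < gB")
    case True
    obtain mu where mu: "mu < Tm l" "Fsec l mu = gA" using Fsec_root by blast
    obtain nu where nu: "nu < Tm l" "Fsec l nu = gB" using Fsec_root by blast
    have mn: "mu < nu"
    proof (rule ccontr)
      assume "\<not> mu < nu"
      then have "Fsec l nu \<le> Fsec l mu" using Fsec_mono[of nu mu] mu by (cases "nu = mu") auto
      then show False using mu nu True by simp
    qed
    show ?thesis unfolding lambda1_def
    proof (rule inf_compare[where mu = mu and nu = nu and b = nu])
      show "mu \<in> {lam. is_eigenvalue (dirichlet_at VB G) lam}" using True mu G1B_exists by auto
      show "nu \<in> {lam. is_eigenvalue (dirichlet_at VA G) lam}" using True nu G1A_exists by auto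
      show "\<forall>x\<in>{lam. is_eigenvalue (dirichlet_at VB G) lam}. mu \<le> x"
      proof
        fix x assume x: "x \<in> {lam. is_eigenvalue (dirichlet_at VB G) lam}"
        show "mu \<le> x"
        proof (cases "x < Tm l")
          case True
          then have "Fsec l x = gA" using x \<open>G = Gamma1 l gA gB \<and> gA < gB\<close> G1B_char by auto
          then show ?thesis using Fsec_inj[of x mu] True mu by auto
        qed (use mu in auto)
      qed
      show "\<forall>x\<in>{lam. is_eigenvalue (dirichlet_at VA G) lam}. nu \<le> x"
      proof
        fix x assume x: "x \<in> {lam. is_eigenvalue (dirichlet_at VA G) lam}"
        show "nu \<le> x"
        proof (cases "x < Tm l")
          case True
          then have "Fsec l x = gB" using x \<open>G = Gamma1 l gA gB \<and> gA < gB\<close> G1A_char by auto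
          then show ?thesis using Fsec_inj[of x nu] True nu by auto
        qed (use nu in auto)
      qed
    qed (rule mn)
  next
    case False
    then have G: "G = Gamma2 l" using assms(2) by blast
    obtain mu where mu: "0 < mu" "mu < T2 l" "Hsec l mu = 0" using Hsec_root by blast
    obtain nu where nu: "nu < Tm l" "Fsec l nu = 0" using Fsec_root by blast
    have mn: "mu < nu"
    proof (rule ccontr)
      assume "\<not> mu < nu"
      then have "Fsec l nu \<le> Fsec l mu" using Fsec_mono[of nu mu] mu T2_le by (cases "nu = mu") auto
      moreover have "0 < pfun (l 0) mu" using mu T2_le l0 by (intro pfun_pos) auto
      ultimately show False using mu nu by (simp add: Hsec_def)
    qed
    show ?thesis unfolding lambda1_def
    proof (rule inf_compare[where mu = mu and nu = nu and b = "min (T2 l) nu"])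
      show "mu \<in> {lam. is_eigenvalue (dirichlet_at VB G) lam}" using G mu G2B_exists by auto
      show "nu \<in> {lam. is_eigenvalue (dirichlet_at VA G) lam}" using G nu G2A_exists by auto
      show "\<forall>x\<in>{lam. is_eigenvalue (dirichlet_at VB G) lam}. mu \<le> x"
      proof
        fix x assume x: "x \<in> {lam. is_eigenvalue (dirichlet_at VB G) lam}"
        show "mu \<le> x"
        proof (cases "x < T2 l")
          case True
          then have "Hsec l x = 0" using x G G2B_char by auto
          then show ?thesis using Hsec_inj[of x mu] True mu by auto
        qed (use mu in auto)
      qed
      show "\<forall>x\<in>{lam. is_eigenvalue (dirichlet_at VA G) lam}. min (T2 l) nu \<le> x"
      proof
        fix x assume x: "x \<in> {lam. is_eigenvalue (dirichlet_at VA G) lam}"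
        show "min (T2 l) nu \<le> x"
        proof (cases "x < T2 l")
          case True
          then have "Fsec l x = 0" using x G G2A_char by auto
          then have "x = nu" using Fsec_inj[of x nu] True nu T2_le by auto
          then show ?thesis by simp
        qed auto
      qed
      show "mu < min (T2 l) nu" using mu mn by simp
    qed
  qed
qed


end
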